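(* Let $M$ be a $C^\infty$ real hypersurface in $\mathbb{C}^2$ and $p\in M$. If $\gamma\in\Gamma$ is tangent to $M$ at $p$ to infinite order, then $\gamma\in\Gamma^{\rm reg}$.
   Context: A local defining function $r$ for $M$ near $p$ is a real-valued $C^\infty$ function with $M=\{r=0\}$ near $p$ and $\nabla r\ne0$ on $M$. $\operatorname{ord}(h)$ denotes order of vanishing at $0$. $\Gamma$ is the set of germs of nonconstant holomorphic maps $\gamma:(\mathbb{C},0)\to(\mathbb{C}^2,p)$, always taken with a good parametrization (each point of the image corresponds to only one value of $t$). $\Gamma^{\rm reg}=\{\gamma\in\Gamma:\operatorname{ord}(\gamma-p)=1\}$. $\gamma$ is tangent to $M$ at $p$ to infinite order if $(r\circ\gamma)(t)=O(t^N)$ as $t\to0$ for every $N\in\mathbb{N}$. *)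

theory Defs
  imports "HOL-Analysis.Analysis" "HOL-Complex_Analysis.Complex_Analysis" "HOL-Library.Landau_Symbols"
begin

primrec Ck_on :: "nat \<Rightarrow> 'a::real_normed_vector set \<Rightarrow> ('a \<Rightarrow> 'b::real_normed_vector) \<Rightarrow> bool" where
  "Ck_on 0 U f = continuous_on U f"
| "Ck_on (Suc k) U f = ((\<forall>x\<in>U. f differentiable (at x)) \<and>
      (\<forall>v. Ck_on k U (\<lambda>x. frechet_derivative f (at x) v)))"

definition smooth_on :: "'a::real_normed_vector set \<Rightarrow> ('a \<Rightarrow> 'b::real_normed_vector) \<Rightarrow> bool" where
  "smooth_on U f \<longleftrightarrow> open U \<and> (\<forall>k. Ck_on k U f)"

definition local_defining_function ::
  "(complex \<times> complex) set \<Rightarrow> complex \<times> complex \<Rightarrow> (complex \<times> complex) set \<Rightarrow> (complex \<times> complex \<Rightarrow> real) \<Rightarrow> bool" where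
  "local_defining_function M p U r \<longleftrightarrow>
     open U \<and> p \<in> U \<and> smooth_on U r \<and>
     M \<inter> U = {z \<in> U. r z = 0} \<and>
     (\<forall>z\<in>M \<inter> U. frechet_derivative r (at z) \<noteq> (\<lambda>v. 0))"

definition smooth_real_hypersurface :: "(complex \<times> complex) set \<Rightarrow> bool" where
  "smooth_real_hypersurface M \<longleftrightarrow> (\<forall>q\<in>M. \<exists>U r. local_defining_function M q U r)"

definition vanishing_order :: "(complex \<Rightarrow> complex \<times> complex) \<Rightarrow> nat" where
  "vanishing_order h = (LEAST n. (deriv ^^ n) (\<lambda>t. fst (h t)) 0 \<noteq> 0 \<or> (deriv ^^ n) (\<lambda>t. snd (h t)) 0 \<noteq> 0)"

text \<open>Germ in \<Gamma> (with a good parametrization), represented on a disc ball 0 e.\<close>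
definition in_Gamma :: "complex \<times> complex \<Rightarrow> (complex \<Rightarrow> complex \<times> complex) \<Rightarrow> bool" where
  "in_Gamma p \<gamma> \<longleftrightarrow> (\<exists>e>0. (\<lambda>t. fst (\<gamma> t)) holomorphic_on ball 0 e \<and>
       (\<lambda>t. snd (\<gamma> t)) holomorphic_on ball 0 e \<and>
       \<gamma> 0 = p \<and> (\<exists>t\<in>ball 0 e. \<gamma> t \<noteq> p) \<and> inj_on \<gamma> (ball 0 e))"

definition in_Gamma_reg :: "complex \<times> complex \<Rightarrow> (complex \<Rightarrow> complex \<times> complex) \<Rightarrow> bool" where
  "in_Gamma_reg p \<gamma> \<longleftrightarrow> in_Gamma p \<gamma> \<and> vanishing_order (\<lambda>t. \<gamma> t - p) = 1"

definition tangent_infinite_order :: "(complex \<times> complex \<Rightarrow> real) \<Rightarrow> (complex \<Rightarrow> complex \<times> complex) \<Rightarrow> bool" where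
  "tangent_infinite_order r \<gamma> \<longleftrightarrow> (\<forall>N::nat. (\<lambda>t. r (\<gamma> t)) \<in> O[at 0](\<lambda>t. cmod t ^ N))"

end

theory Submission
  imports Defs
begin


lemma factor_zero:
  fixes \<delta> :: "complex \<Rightarrow> complex" and e :: real
  assumes hol: "\<delta> holomorphic_on ball 0 e" and c0: "(0::complex) \<in> ball 0 e" and d0: "\<delta> 0 = 0" and nc: "\<not> \<delta> constant_on ball 0 e"
  shows "\<exists>j \<rho> u. 0 < j \<and> 0 < \<rho> \<and> ball (0::complex) \<rho> \<subseteq> ball 0 e \<and> u holomorphic_on ball 0 \<rho> \<and>
     (\<forall>w\<in>ball 0 \<rho>. \<delta> w = w^j * u w) \<and> (\<forall>w\<in>ball 0 \<rho>. u w \<noteq> 0)"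
proof (rule holomorphic_factor_zero_nonconstant[OF hol open_ball connected_ball c0 d0 nc])
  fix g r n
  assume "0 < n" "0 < r" "ball (0::complex) r \<subseteq> ball 0 e" "g holomorphic_on ball 0 r"
      "\<And>w. w \<in> ball 0 r \<Longrightarrow> \<delta> w = (w - 0)^n * g w" "\<And>w. w \<in> ball 0 r \<Longrightarrow> g w \<noteq> 0"
  then show ?thesis by (intro exI[of _ n] exI[of _ r] exI[of _ g] conjI ballI) (auto simp del: mem_ball_0 mem_ball)
qed

lemma leading_term_contra:
  fixes \<delta> :: "complex \<Rightarrow> complex" and e :: real
  assumes hol: "\<delta> holomorphic_on ball 0 e" and "e > 0" and d0: "\<delta> 0 = 0"
    and nz: "\<not>(\<exists>d>0. \<forall>t\<in>ball 0 d. \<delta> t = 0)"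
    and est: "\<And>N. \<exists>K. eventually (\<lambda>t. \<bar>Re (\<delta> t)\<bar> \<le> cmod (\<delta> t) / 2 + K * cmod t ^ N) (at 0)"
  shows False
proof -
  have nc: "\<not> \<delta> constant_on ball 0 e"
  proof
    assume "\<delta> constant_on ball 0 e"
    then have "\<forall>t\<in>ball 0 e. \<delta> t = 0" using d0 \<open>e>0\<close> unfolding constant_on_def
      by (metis centre_in_ball)
    with nz \<open>e>0\<close> show False by blast
  qed
  have c0: "(0::complex) \<in> ball 0 e" using \<open>e>0\<close> by simp
  obtain j \<rho> u where j: "0 < j" and "0 < \<rho>" and "ball (0::complex) \<rho> \<subseteq> ball 0 e"
    and uh: "u holomorphic_on ball 0 \<rho>"
    and fac: "\<And>w. w \<in> ball 0 \<rho> \<Longrightarrow> \<delta> w = w^j * u w"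
    and unz: "\<And>w. w \<in> ball 0 \<rho> \<Longrightarrow> u w \<noteq> 0"
    using factor_zero[OF hol c0 d0 nc] by blast
  define u0 where "u0 = u 0"
  have "u0 \<noteq> 0" using unz \<open>0<\<rho>\<close> by (simp add: u0_def)
  define \<tau> where "\<tau> = cis (- Arg u0 / j)"
  have "\<tau>^j = cis (- Arg u0)" using j unfolding \<tau>_def Complex.DeMoivre by simp
  then have \<tau>j: "\<tau>^j * u0 = of_real (cmod u0)"
  proof -
    have "u0 = of_real (cmod u0) * sgn u0" using \<open>u0 \<noteq> 0\<close> by (simp add: sgn_eq)
    also have "sgn u0 = cis (Arg u0)" using cis_Arg[OF \<open>u0 \<noteq> 0\<close>] by simp
    finally have "\<tau>^j * u0 = of_real (cmod u0) * (cis (- Arg u0) * cis (Arg u0))"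
      using \<open>\<tau>^j = cis (- Arg u0)\<close> by (simp add: mult_ac)
    also have "cis (- Arg u0) * cis (Arg u0) = 1" by (simp add: cis_mult)
    finally show ?thesis by simp
  qed
  have cmt: "cmod \<tau> = 1" unfolding \<tau>_def by simp
  obtain K where K: "eventually (\<lambda>t. \<bar>Re (\<delta> t)\<bar> \<le> cmod (\<delta> t)/2 + K * cmod t ^ (j+1)) (at 0)"
    using est by blast
  have tl: "((\<lambda>s::real. of_real s * \<tau>) \<longlongrightarrow> 0) (at_right 0)"
    by (auto intro!: tendsto_eq_intros)
  have lim: "filterlim (\<lambda>s::real. of_real s * \<tau>) (at 0) (at_right 0)"
    unfolding filterlim_at using tl cmt
    by (auto simp: eventually_at_right_less eventually_at_right_field intro!: exI[of _ 1])
  have ev1: "eventually (\<lambda>s. \<bar>Re (\<delta> (of_real s * \<tau>))\<bar> \<le> cmod (\<delta> (of_real s*\<tau>))/2 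
       + K * cmod (of_real s * \<tau>) ^ (j+1)) (at_right 0)"
    using eventually_compose_filterlim[OF K lim] by simp
  have ev2: "eventually (\<lambda>s. of_real s * \<tau> \<in> ball 0 \<rho>) (at_right (0::real))"
    using tl \<open>0<\<rho>\<close> unfolding tendsto_iff by (auto simp: dist_norm)
  have ev3: "eventually (\<lambda>s. \<bar>Re (\<tau>^j * u (of_real s * \<tau>))\<bar> \<le> cmod (u (of_real s*\<tau>))/2 + K * s) (at_right (0::real))"
    using ev1 ev2 eventually_at_right_less[of 0]
  proof eventually_elim
    case (elim s)
    have sp: "s > 0" using elim by simp
    have "\<delta> (of_real s * \<tau>) = of_real (s^j) * (\<tau>^j * u (of_real s * \<tau>))"
      using fac[OF elim(2)] by (simp add: power_mult_distrib)
    then have "\<bar>Re (\<delta> (of_real s * \<tau>))\<bar> = s^j * \<bar>Re (\<tau>^j * u (of_real s * \<tau>))\<bar>"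
      "cmod (\<delta> (of_real s * \<tau>)) = s^j * cmod (u (of_real s * \<tau>))"
      using sp cmt by (auto simp: norm_mult norm_power abs_mult)
    moreover have "cmod (of_real s * \<tau>) ^ (j+1) = s^j * s" using sp cmt by (simp add: norm_mult)
    ultimately have "s^j * \<bar>Re (\<tau>^j * u (of_real s * \<tau>))\<bar> \<le> s^j * (cmod (u (of_real s*\<tau>))/2 + K * s)"
      using elim(1) by (simp add: algebra_simps)
    then show ?case using sp by simp
  qed
  have ucont: "isCont u 0"
  proof -
    have "continuous_on (ball 0 \<rho>) u" using uh by (rule holomorphic_on_imp_continuous_on)
    then show ?thesis using \<open>0<\<rho>\<close> by (simp add: continuous_on_eq_continuous_at)
  qed
  have ul: "((\<lambda>s. u (of_real s * \<tau>)) \<longlongrightarrow> u0) (at_right 0)"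
    unfolding u0_def using isCont_tendsto_compose[OF ucont tl] .
  have l1: "((\<lambda>s. cmod (u (of_real s*\<tau>))/2 + K * s) \<longlongrightarrow> cmod u0 / 2 + K * 0) (at_right 0)"
    by (intro tendsto_intros ul) simp
  have l2: "((\<lambda>s. \<bar>Re (\<tau>^j * u (of_real s * \<tau>))\<bar>) \<longlongrightarrow> \<bar>Re (\<tau>^j * u0)\<bar>) (at_right 0)"
    by (intro tendsto_intros ul)
  have "\<bar>Re (\<tau>^j * u0)\<bar> \<le> cmod u0 / 2 + K * 0"
    using tendsto_le[OF trivial_limit_at_right_real l1 l2 ev3] .
  then have "cmod u0 \<le> cmod u0 / 2" using \<tau>j by simp
  then show False using \<open>u0 \<noteq> 0\<close> by simp
qed


lemma deriv_mult_id:
  fixes E :: "complex \<Rightarrow> complex" and \<rho> :: real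
  assumes "E holomorphic_on ball 0 \<rho>" "\<rho> > 0"
  shows "deriv (\<lambda>w. w * E w) 0 = E 0"
proof -
  have "E field_differentiable (at 0)"
    using holomorphic_on_imp_differentiable_at[OF assms(1) open_ball] assms(2) by simp
  then have "DERIV E 0 :> deriv E 0" by (simp add: DERIV_deriv_iff_field_differentiable)
  from DERIV_mult[OF DERIV_ident this] have "DERIV (\<lambda>w. w * E w) 0 :> E 0" by simp
  then show ?thesis by (rule DERIV_imp_deriv)
qed

lemma root_swap:
  fixes H :: "complex \<Rightarrow> complex" and e :: real
  assumes hol: "H holomorphic_on ball 0 e" and "e > 0" and H0: "H 0 = 0" and dH: "deriv H 0 = 0"
    and nz: "\<not>(\<exists>d>0. \<forall>t\<in>ball 0 d. H t = 0)"
  shows "\<exists>d \<sigma>. d > 0 \<and> \<sigma> holomorphic_on ball 0 d \<and> \<sigma> 0 = 0 \<and> \<sigma> ` ball 0 d \<subseteq> ball 0 e \<and>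
           (\<forall>t\<in>ball 0 d. H (\<sigma> t) = H t) \<and> (\<forall>t\<in>ball 0 d. t \<noteq> 0 \<longrightarrow> \<sigma> t \<noteq> t)"
proof -
  have nc: "\<not> H constant_on ball 0 e"
  proof
    assume "H constant_on ball 0 e"
    then have "\<forall>t\<in>ball 0 e. H t = 0" using H0 \<open>e>0\<close> unfolding constant_on_def
      by (metis centre_in_ball)
    with nz \<open>e>0\<close> show False by blast
  qed
  have c0: "(0::complex) \<in> ball 0 e" using \<open>e>0\<close> by simp
  obtain n \<rho> g where n: "0 < n" and "0 < \<rho>" and \<rho>e: "ball (0::complex) \<rho> \<subseteq> ball 0 e"
    and gh: "g holomorphic_on ball 0 \<rho>"
    and fac: "\<And>w. w \<in> ball 0 \<rho> \<Longrightarrow> H w = w^n * g w"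
    and gnz: "\<And>w. w \<in> ball 0 \<rho> \<Longrightarrow> g w \<noteq> 0"
    using factor_zero[OF hol c0 H0 nc] by blast
  have c0\<rho>: "(0::complex) \<in> ball 0 \<rho>" using \<open>0<\<rho>\<close> by simp
  have n2: "n \<ge> 2"
  proof (rule ccontr)
    assume "\<not> n \<ge> 2"
    with n have "n = 1" by simp
    have "eventually (\<lambda>w. H w = w * g w) (nhds 0)"
      using fac \<open>n = 1\<close> eventually_nhds_metric[of _ "0::complex"] \<open>0<\<rho>\<close>
      by (metis (mono_tags, lifting) dist_commute mem_ball power_one_right)
    then have "deriv H 0 = deriv (\<lambda>w. w * g w) 0" by (rule deriv_cong_ev) simp
    also have "\<dots> = g 0" by (rule deriv_mult_id[OF gh \<open>0<\<rho>\<close>])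
    finally show False using dH gnz[OF c0\<rho>] by simp
  qed
  obtain lg where lgh: "lg holomorphic_on ball 0 \<rho>" and lg: "\<And>w. w \<in> ball 0 \<rho> \<Longrightarrow> g w = exp (lg w)"
    using contractible_imp_holomorphic_log[OF gh convex_imp_contractible[OF convex_ball]] gnz by blast
  define E where "E w = exp (lg w / of_nat n)" for w
  define k where "k w = w * E w" for w
  have Eh: "E holomorphic_on ball 0 \<rho>" unfolding E_def using lgh n
    by (auto intro!: holomorphic_intros)
  have kh: "k holomorphic_on ball 0 \<rho>" unfolding k_def using Eh
    by (auto intro!: holomorphic_intros)
  have kpow: "k w ^ n = H w" if "w \<in> ball 0 \<rho>" for w
  proof -
    have "E w ^ n = exp (of_nat n * (lg w / of_nat n))" unfolding E_def by (rule exp_of_nat_mult[symmetric])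
    also have "of_nat n * (lg w / of_nat n) = lg w" using n by simp
    finally have "E w ^ n = g w" using lg[OF that] by simp
    then show ?thesis unfolding k_def using fac[OF that] by (simp add: power_mult_distrib)
  qed
  have k0: "k 0 = 0" unfolding k_def by simp
  have dk: "deriv k 0 \<noteq> 0"
  proof -
    have "deriv k 0 = E 0" unfolding k_def by (rule deriv_mult_id[OF Eh \<open>0<\<rho>\<close>])
    then show ?thesis unfolding E_def by simp
  qed
  obtain r2 where "r2 > 0" and r2\<rho>: "ball (0::complex) r2 \<subseteq> ball 0 \<rho>" and kinj: "inj_on k (ball 0 r2)"
    by (rule has_complex_derivative_locally_injective[OF kh c0\<rho> open_ball dk])
  have kh2: "k holomorphic_on ball 0 r2" using kh r2\<rho> holomorphic_on_subset by blast
  obtain kinv where kinvh: "kinv holomorphic_on k ` ball 0 r2" and kinv: "\<And>z. z \<in> ball 0 r2 \<Longrightarrow> kinv (k z) = z"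
    by (rule holomorphic_has_inverse[OF kh2 open_ball kinj]) blast
  have "open (k ` ball 0 r2)" by (rule open_mapping_thm3[OF kh2 open_ball kinj])
  moreover have "0 \<in> k ` ball 0 r2" using k0 \<open>r2>0\<close> by (metis centre_in_ball imageI)
  ultimately obtain r3 where "r3 > 0" and r3: "ball 0 r3 \<subseteq> k ` ball 0 r2"
    using open_contains_ball by blast
  have "isCont k 0"
    using kh \<open>0<\<rho>\<close> holomorphic_on_imp_continuous_on continuous_on_eq_continuous_at open_ball c0\<rho> by blast
  then obtain d0 where "d0 > 0" and d0: "k ` ball 0 d0 \<subseteq> ball 0 r3"
    using continuous_at_ball \<open>r3 > 0\<close> k0 by metis
  define d where "d = min d0 r2"
  have "d > 0" using \<open>d0>0\<close> \<open>r2>0\<close> by (simp add: d_def)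
  define \<omega> where "\<omega> = cis (2 * pi / real n)"
  have \<omega>n: "\<omega> ^ n = 1" unfolding \<omega>_def Complex.DeMoivre using n by simp
  have \<omega>1: "\<omega> \<noteq> 1"
  proof
    assume "\<omega> = 1"
    have "cos (2 * pi / real n) = Re \<omega>" unfolding \<omega>_def by simp
    then have "cos (2 * pi / real n) = 1" using \<open>\<omega> = 1\<close> by simp
    moreover have "cos (2 * pi / real n) < cos 0"
    proof (rule cos_monotone_0_pi)
      show "0 < 2 * pi / real n" using n by simp
      have "2 * pi / real n \<le> 2 * pi / 2" using n2 by (intro divide_left_mono) auto
      then show "2 * pi / real n \<le> pi" by simp
    qed simp
    ultimately show False by simp
  qed
  have n\<omega>: "cmod \<omega> = 1" unfolding \<omega>_def by simp
  define \<sigma> where "\<sigma> t = kinv (\<omega> * k t)" for t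
  have key: "\<sigma> t \<in> ball 0 r2 \<and> k (\<sigma> t) = \<omega> * k t \<and> \<omega> * k t \<in> k ` ball 0 r2" if "t \<in> ball 0 d" for t
  proof -
    have "t \<in> ball 0 d0" using that by (simp add: d_def)
    then have "k t \<in> ball 0 r3" using d0 by blast
    then have "\<omega> * k t \<in> ball 0 r3" using n\<omega> by (simp add: norm_mult)
    then obtain z where z: "z \<in> ball 0 r2" "k z = \<omega> * k t" using r3 by (metis imageE subsetD)
    then have "\<sigma> t = z" unfolding \<sigma>_def using kinv by metis
    then show ?thesis using z by (metis imageI)
  qed
  have "\<sigma> holomorphic_on ball 0 d"
  proof -
    have "(\<lambda>t. \<omega> * k t) holomorphic_on ball 0 d"
      using kh r2\<rho> by (auto simp: d_def intro!: holomorphic_intros elim!: holomorphic_on_subset)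
    moreover have "(\<lambda>t. \<omega> * k t) ` ball 0 d \<subseteq> k ` ball 0 r2" using key by blast
    ultimately have "(kinv \<circ> (\<lambda>t. \<omega> * k t)) holomorphic_on ball 0 d"
      by (rule holomorphic_on_compose_gen[OF _ kinvh])
    moreover have "\<sigma> = (\<lambda>t. kinv (\<omega> * k t))" by (rule ext) (simp add: \<sigma>_def)
    ultimately show ?thesis by (simp add: comp_def)
  qed
  moreover have "\<sigma> 0 = 0" unfolding \<sigma>_def using k0 kinv[of 0] \<open>r2>0\<close> by simp
  moreover have "\<sigma> ` ball 0 d \<subseteq> ball 0 e" using key r2\<rho> \<rho>e by blast
  moreover have "\<forall>t\<in>ball 0 d. H (\<sigma> t) = H t"
  proof
    fix t :: complex assume t: "t \<in> ball 0 d"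
    have "t \<in> ball 0 r2" using t by (simp add: d_def)
    then have t\<rho>: "t \<in> ball 0 \<rho>" using r2\<rho> by blast
    have "\<sigma> t \<in> ball 0 r2" using key[OF t] by blast
    then have "\<sigma> t \<in> ball 0 \<rho>" using r2\<rho> by blast
    then have "H (\<sigma> t) = k (\<sigma> t) ^ n" using kpow by metis
    also have "\<dots> = \<omega>^n * k t ^ n" using key[OF t] by (simp add: power_mult_distrib)
    also have "\<dots> = H t" using \<omega>n kpow[OF t\<rho>] by simp
    finally show "H (\<sigma> t) = H t" .
  qed
  moreover have "\<forall>t\<in>ball 0 d. t \<noteq> 0 \<longrightarrow> \<sigma> t \<noteq> t"
  proof (intro ballI impI notI)
    fix t assume t: "t \<in> ball 0 d" and "t \<noteq> 0" and st: "\<sigma> t = t"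
    then have "k t = \<omega> * k t" using key[OF t] by simp
    then have "(1 - \<omega>) * k t = 0" by (simp add: algebra_simps)
    then have "k t = k 0" using \<omega>1 k0 by simp
    moreover have "t \<in> ball 0 r2" using t by (simp add: d_def)
    ultimately have "t = 0" using kinj \<open>r2>0\<close> by (simp add: inj_on_def)
    then show False using \<open>t \<noteq> 0\<close> by simp
  qed
  ultimately show ?thesis using \<open>d>0\<close> by blast
qed




lemma onorm_basis_bound:
  fixes A :: "'a::euclidean_space \<Rightarrow> 'b::real_normed_vector"
  assumes "bounded_linear A"
  shows "onorm A \<le> (\<Sum>b\<in>Basis. norm (A b))"
proof (rule onorm_le)
  fix x :: 'a
  interpret bounded_linear A by fact
  have "A x = A (\<Sum>b\<in>Basis. (x \<bullet> b) *\<^sub>R b)" by (simp add: euclidean_representation)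
  also have "\<dots> = (\<Sum>b\<in>Basis. (x \<bullet> b) *\<^sub>R A b)" by (simp add: sum scale)
  finally have "norm (A x) = norm (\<Sum>b\<in>Basis. (x \<bullet> b) *\<^sub>R A b)" by simp
  also have "\<dots> \<le> (\<Sum>b\<in>Basis. norm ((x \<bullet> b) *\<^sub>R A b))" by (rule norm_sum)
  also have "\<dots> \<le> (\<Sum>b\<in>Basis. norm x * norm (A b))"
    by (intro sum_mono) (simp add: Basis_le_norm mult_right_mono)
  finally show "norm (A x) \<le> (\<Sum>b\<in>Basis. norm (A b)) * norm x" by (simp add: sum_distrib_left mult.commute)
qed

lemma C1_estimate:
  fixes M U :: "(complex \<times> complex) set" and p :: "complex \<times> complex" and r :: "complex \<times> complex \<Rightarrow> real"
  assumes ldf: "local_defining_function M p U r" and pM: "p \<in> M"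
  shows "bounded_linear (frechet_derivative r (at p)) \<and> frechet_derivative r (at p) \<noteq> (\<lambda>v. 0) \<and> r p = 0 \<and> p \<in> U \<and>
    (\<forall>\<epsilon>>0. \<exists>\<rho>>0. ball p \<rho> \<subseteq> U \<and> (\<forall>x\<in>ball p \<rho>. \<forall>y\<in>ball p \<rho>.
        \<bar>r x - r y - frechet_derivative r (at p) (x - y)\<bar> \<le> \<epsilon> * norm (x - y)))"
proof -
  have oU: "open U" and pU: "p \<in> U" and sm: "smooth_on U r" and MU: "M \<inter> U = {z \<in> U. r z = 0}"
    and nd: "\<forall>z\<in>M \<inter> U. frechet_derivative r (at z) \<noteq> (\<lambda>v. 0)"
    using ldf unfolding local_defining_function_def by auto
  have C1: "Ck_on (Suc 0) U r" using sm unfolding smooth_on_def by blast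
  then have dif: "\<forall>x\<in>U. r differentiable (at x)"
    and cont: "\<And>v. continuous_on U (\<lambda>x. frechet_derivative r (at x) v)" by auto
  define D where "D x = frechet_derivative r (at x)" for x
  have hd: "(r has_derivative D x) (at x)" if "x \<in> U" for x
    unfolding D_def using dif that by (blast intro: frechet_derivative_works[THEN iffD1])
  have bl: "bounded_linear (D x)" if "x \<in> U" for x using hd[OF that] has_derivative_bounded_linear by blast
  have rp: "r p = 0" using pM pU MU by blast
  have Lnz: "D p \<noteq> (\<lambda>v. 0)" unfolding D_def using nd pM pU by blast
  have est: "\<exists>\<rho>>0. ball p \<rho> \<subseteq> U \<and> (\<forall>x\<in>ball p \<rho>. \<forall>y\<in>ball p \<rho>.
        \<bar>r x - r y - D p (x - y)\<bar> \<le> \<epsilon> * norm (x - y))" if "\<epsilon> > 0" for \<epsilon>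
  proof -
    define \<epsilon>' where "\<epsilon>' = \<epsilon> / real DIM(complex \<times> complex)"
    have "\<epsilon>' > 0" using that by (simp add: \<epsilon>'_def)
    have evb: "eventually (\<lambda>x. \<bar>D x b - D p b\<bar> < \<epsilon>') (nhds p)" for b
    proof -
      have "isCont (\<lambda>x. D x b) p" using cont[of b] oU pU unfolding D_def
        by (simp add: continuous_on_eq_continuous_at)
      then obtain \<delta> where "\<delta> > 0" and \<delta>: "(\<lambda>x. D x b) ` ball p \<delta> \<subseteq> ball (D p b) \<epsilon>'"
        using continuous_at_ball \<open>\<epsilon>'>0\<close> by metis
      show ?thesis unfolding eventually_nhds_metric
      proof (intro exI[of _ \<delta>] conjI allI impI)
        fix x assume "dist x p < \<delta>"
        then have "x \<in> ball p \<delta>" by (simp add: dist_commute)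
        then have "D x b \<in> ball (D p b) \<epsilon>'" using \<delta> by blast
        then show "\<bar>D x b - D p b\<bar> < \<epsilon>'" by (simp add: dist_real_def abs_minus_commute)
      qed fact
    qed
    have "eventually (\<lambda>x. x \<in> U \<and> (\<forall>b\<in>Basis. \<bar>D x b - D p b\<bar> < \<epsilon>')) (nhds p)"
      using eventually_nhds_in_open[OF oU pU] eventually_ball_finite[OF finite_Basis, of "\<lambda>x b. \<bar>D x b - D p b\<bar> < \<epsilon>'"] evb
      by (simp add: eventually_conj_iff)
    then obtain \<rho> where "\<rho> > 0" and \<rho>: "\<And>x. dist x p < \<rho> \<Longrightarrow> x \<in> U \<and> (\<forall>b\<in>Basis. \<bar>D x b - D p b\<bar> < \<epsilon>')"
      unfolding eventually_nhds_metric by blast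
    have bU: "ball p \<rho> \<subseteq> U" using \<rho> by (auto simp: dist_commute)
    have onb: "onorm (D z - D p) \<le> \<epsilon>" if "z \<in> ball p \<rho>" for z
    proof -
      have zU: "z \<in> U" and zb: "\<forall>b\<in>Basis. \<bar>D z b - D p b\<bar> < \<epsilon>'" using \<rho>[of z] that by (auto simp: dist_commute)
      have "bounded_linear (D z - D p)"
        unfolding fun_diff_def using bounded_linear_sub[OF bl[OF zU] bl[OF pU]] .
      then have "onorm (D z - D p) \<le> (\<Sum>b\<in>Basis. norm ((D z - D p) b))" by (rule onorm_basis_bound)
      also have "\<dots> \<le> of_nat (card (Basis :: (complex \<times> complex) set)) * \<epsilon>'"
        by (rule sum_bounded_above) (use zb in \<open>auto intro: less_imp_le\<close>)
      also have "\<dots> = \<epsilon>" unfolding \<epsilon>'_def by simp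
      finally show ?thesis .
    qed
    show ?thesis
    proof (intro exI[of _ \<rho>] conjI ballI)
      fix x y assume x: "x \<in> ball p \<rho>" and y: "y \<in> ball p \<rho>"
      have "norm (r x - r y - D p (x - y)) \<le> norm (x - y) * \<epsilon>"
      proof (rule differentiable_bound_linearization[where S="ball p \<rho>" and f'=D])
        fix t :: real assume "t \<in> {0..1}"
        then have "(1 - t) *\<^sub>R y + t *\<^sub>R x \<in> ball p \<rho>"
          using x y convex_ball[of p \<rho>] unfolding convex_alt by auto
        moreover have "(1 - t) *\<^sub>R y + t *\<^sub>R x = y + t *\<^sub>R (x - y)" by (simp add: algebra_simps)
        ultimately show "y + t *\<^sub>R (x - y) \<in> ball p \<rho>" by simp
      next
        fix z assume "z \<in> ball p \<rho>"
        then show "(r has_derivative D z) (at z within ball p \<rho>)"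
          using hd bU by (blast intro: has_derivative_at_withinI)
      next
        fix z assume "z \<in> ball p \<rho>"
        then show "onorm (D z - D p) \<le> \<epsilon>" by (rule onb)
      next
        show "p \<in> ball p \<rho>" using \<open>\<rho>>0\<close> by simp
      qed
      then show "\<bar>r x - r y - D p (x - y)\<bar> \<le> \<epsilon> * norm (x - y)" by (simp add: mult.commute)
    qed (use \<open>\<rho>>0\<close> bU in auto)
  qed
  show ?thesis using bl[OF pU] Lnz rp pU est unfolding D_def by blast
qed


lemma holo_lin_bound:
  fixes \<sigma> :: "complex \<Rightarrow> complex" and d :: real
  assumes "\<sigma> holomorphic_on ball 0 d" "d > 0" "\<sigma> 0 = 0"
  shows "\<exists>C\<ge>0. eventually (\<lambda>t. cmod (\<sigma> t) \<le> C * cmod t) (at 0)"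
proof -
  have "\<sigma> field_differentiable (at 0)"
    using holomorphic_on_imp_differentiable_at[OF assms(1) open_ball] assms(2) by simp
  then obtain D where "(\<sigma> has_field_derivative D) (at 0)" unfolding field_differentiable_def by blast
  then have lim: "((\<lambda>y. \<sigma> y / y) \<longlongrightarrow> D) (at 0)" unfolding has_field_derivative_iff using assms(3) by simp
  then have "eventually (\<lambda>y. dist (\<sigma> y / y) D < 1) (at 0)" using tendstoD zero_less_one by blast
  moreover have "eventually (\<lambda>y. y \<in> ball 0 1 \<and> y \<noteq> 0 \<and> y \<in> UNIV) (at (0::complex))"
    by (rule eventually_at_ball') simp
  ultimately have "eventually (\<lambda>y. cmod (\<sigma> y) \<le> (cmod D + 1) * cmod y) (at 0)"
  proof eventually_elim
    case (elim y)
    have "cmod (\<sigma> y / y) \<le> cmod D + cmod (\<sigma> y / y - D)" by (rule norm_triangle_sub)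
    also have "\<dots> \<le> cmod D + 1" using elim(1) by (simp add: dist_norm)
    finally have "cmod (\<sigma> y) / cmod y \<le> cmod D + 1" by (simp add: norm_divide)
    then show ?case using elim(2) by (simp add: divide_le_eq)
  qed
  then show ?thesis by (intro exI[of _ "cmod D + 1"]) auto
qed

lemma deriv_zero_DERIV:
  fixes A :: "complex \<Rightarrow> complex" and e :: real
  assumes "A holomorphic_on ball 0 e" "e > 0" "deriv A 0 = 0"
  shows "DERIV A 0 :> 0"
proof -
  have "A field_differentiable (at 0)"
    using holomorphic_on_imp_differentiable_at[OF assms(1) open_ball] assms(2) by simp
  then have "DERIV A 0 :> deriv A 0" by (simp add: DERIV_deriv_iff_field_differentiable)
  then show ?thesis using assms(3) by simp
qed

lemma holo_isCont:
  fixes A :: "complex \<Rightarrow> 'b::real_normed_vector" and e :: real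
  assumes "continuous_on (ball 0 e) A" "e > 0"
  shows "isCont A 0"
  using assms by (simp add: continuous_on_eq_continuous_at)

theorem lemma5p2:
  fixes M :: "(complex \<times> complex) set" and p :: "complex \<times> complex"
    and U :: "(complex \<times> complex) set" and r :: "complex \<times> complex \<Rightarrow> real"
    and \<gamma> :: "complex \<Rightarrow> complex \<times> complex"
  assumes "smooth_real_hypersurface M" and "p \<in> M"
    and "local_defining_function M p U r"
    and "in_Gamma p \<gamma>"
    and "tangent_infinite_order r \<gamma>"
  shows "in_Gamma_reg p \<gamma>"
proof -
  from assms(4) obtain e where "e > 0" and h1: "(\<lambda>t. fst (\<gamma> t)) holomorphic_on ball 0 e"
    and h2: "(\<lambda>t. snd (\<gamma> t)) holomorphic_on ball 0 e" and g0: "\<gamma> 0 = p"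
    and inj: "inj_on \<gamma> (ball 0 e)"
    unfolding in_Gamma_def by blast
  note c1 = C1_estimate[OF assms(3) assms(2)]
  define L where "L = frechet_derivative r (at p)"
  have blL: "bounded_linear L" using c1 L_def by blast
  have Lnz: "L \<noteq> (\<lambda>v. 0)" unfolding L_def using c1 by (rule conjunct1[OF conjunct2])
  have rp: "r p = 0" using c1 by blast
  have estL: "\<forall>\<epsilon>>0. \<exists>\<rho>>0. ball p \<rho> \<subseteq> U \<and> (\<forall>x\<in>ball p \<rho>. \<forall>y\<in>ball p \<rho>.
        \<bar>r x - r y - L (x - y)\<bar> \<le> \<epsilon> * norm (x - y))" unfolding L_def using c1 by (rule conjunct2[THEN conjunct2[THEN conjunct2[THEN conjunct2]]])
  define A where "A t = fst (\<gamma> t) - fst p" for t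
  define B where "B t = snd (\<gamma> t) - snd p" for t
  have Ah: "A holomorphic_on ball 0 e" unfolding A_def using h1 by (auto intro!: holomorphic_intros)
  have Bh: "B holomorphic_on ball 0 e" unfolding B_def using h2 by (auto intro!: holomorphic_intros)
  have A0: "A 0 = 0" and B0: "B 0 = 0" using g0 by (auto simp: A_def B_def)
  have main: "deriv A 0 \<noteq> 0 \<or> deriv B 0 \<noteq> 0"
  proof (rule ccontr)
    assume "\<not> (deriv A 0 \<noteq> 0 \<or> deriv B 0 \<noteq> 0)"
    then have dA0: "deriv A 0 = 0" and dB0: "deriv B 0 = 0" by auto
    have dAD: "DERIV A 0 :> 0" by (rule deriv_zero_DERIV[OF Ah \<open>e>0\<close> dA0])
    have dBD: "DERIV B 0 :> 0" by (rule deriv_zero_DERIV[OF Bh \<open>e>0\<close> dB0])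
    interpret L: bounded_linear L by (rule blL)
    define a where "a = Complex (L (1,0)) (- L (\<i>,0))"
    define b where "b = Complex (L (0,1)) (- L (0,\<i>))"
    have Lrep: "L (z,w) = Re (a*z + b*w)" for z w
    proof -
      have eq: "(z,w) = Re z *\<^sub>R (1,0) + Im z *\<^sub>R (\<i>,0) + (Re w *\<^sub>R (0,1) + Im w *\<^sub>R (0,\<i>))"
        by (simp add: complex_eq_iff prod_eq_iff)
      have "L (z,w) = Re z * L (1,0) + Im z * L (\<i>,0) + (Re w * L (0,1) + Im w * L (0,\<i>))"
        by (subst eq) (simp only: L.add L.scale real_scaleR_def)
      then show ?thesis by (simp add: a_def b_def algebra_simps)
    qed
    have ab: "a \<noteq> 0 \<or> b \<noteq> 0"
    proof (rule ccontr)
      assume "\<not> (a \<noteq> 0 \<or> b \<noteq> 0)"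
      then have "a = 0" "b = 0" by auto
      have "L = (\<lambda>v. 0)"
      proof (rule ext)
        fix v :: "complex \<times> complex"
        show "L v = 0" using Lrep[of "fst v" "snd v"] \<open>a = 0\<close> \<open>b = 0\<close> by simp
      qed
      with Lnz show False by simp
    qed
    define S where "S = (cmod a)^2 + (cmod b)^2"
    have "(cmod a)^2 > 0 \<or> (cmod b)^2 > 0" using ab by auto
    then have Spos: "S > 0" unfolding S_def using zero_le_power2[of "cmod a"] zero_le_power2[of "cmod b"] by linarith
    have Sc: "of_real S = a * cnj a + b * cnj b" unfolding S_def of_real_add complex_norm_square by (rule refl)
    define h where "h = (\<lambda>t. a * A t + b * B t)"
    define F where "F = (\<lambda>t. cnj b * A t + (- cnj a) * B t)"
    have recA: "of_real S * A t = cnj a * h t + b * F t" for t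
      unfolding Sc h_def F_def by algebra
    have recB: "of_real S * B t = cnj b * h t - a * F t" for t
      unfolding Sc h_def F_def by algebra
    have Snz: "(of_real S :: complex) \<noteq> 0" using Spos by simp
    have injhF: "t = t'" if "t \<in> ball 0 e" "t' \<in> ball 0 e" "h t = h t'" "F t = F t'" for t t'
    proof -
      have "of_real S * A t = of_real S * A t'" by (simp only: recA that(3) that(4))
      then have eA: "A t = A t'" using Snz by simp
      have "of_real S * B t = of_real S * B t'" by (simp only: recB that(3) that(4))
      then have eB: "B t = B t'" using Snz by simp
      have "\<gamma> t = \<gamma> t'" using eA eB by (simp add: A_def B_def prod_eq_iff)
      then show ?thesis using inj that(1,2) by (simp add: inj_on_def)
    qed
    have hh: "h holomorphic_on ball 0 e" unfolding h_def using Ah Bh by (auto intro!: holomorphic_intros)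
    have Fh: "F holomorphic_on ball 0 e" unfolding F_def using Ah Bh by (auto intro!: holomorphic_intros)
    have h0: "h 0 = 0" and F0: "F 0 = 0" using A0 B0 by (simp_all add: h_def F_def)
    have "DERIV h 0 :> a * 0 + b * 0" unfolding h_def by (intro DERIV_add DERIV_cmult dAD dBD)
    then have dh: "deriv h 0 = 0" by (simp add: DERIV_imp_deriv)
    have "DERIV F 0 :> cnj b * 0 + (- cnj a) * 0" unfolding F_def by (intro DERIV_add DERIV_cmult dAD dBD)
    then have dF: "deriv F 0 = 0" by (simp add: DERIV_imp_deriv)
    show False
    proof (cases "\<exists>d>0. \<forall>t\<in>ball 0 d. F t = 0")
      case True
      then obtain d where "d > 0" and Fz: "\<forall>t\<in>ball 0 d. F t = 0" by blast
      define e1 where "e1 = min d e"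
      have "e1 > 0" using \<open>d>0\<close> \<open>e>0\<close> by (simp add: e1_def)
      have hnz: "\<not>(\<exists>d'>0. \<forall>t\<in>ball 0 d'. h t = 0)"
      proof
        assume "\<exists>d'>0. \<forall>t\<in>ball 0 d'. h t = 0"
        then obtain d' where "d' > 0" and hz: "\<forall>t\<in>ball 0 d'. h t = 0" by blast
        define t0 where "t0 = complex_of_real (min d' e1 / 2)"
        have "t0 \<in> ball 0 d'" "t0 \<in> ball 0 d" "t0 \<in> ball 0 e" "t0 \<noteq> 0"
          using \<open>d'>0\<close> \<open>e1>0\<close> by (auto simp: t0_def e1_def)
        then have "t0 = 0" using injhF[of t0 0] hz Fz h0 F0 \<open>e>0\<close> by simp
        then show False using \<open>t0 \<noteq> 0\<close> by simp
      qed
      have hh1: "h holomorphic_on ball 0 e1" using hh by (rule holomorphic_on_subset) (auto simp: e1_def)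
      obtain d2 \<sigma> where "d2 > 0" and \<sigma>im: "\<sigma> ` ball 0 d2 \<subseteq> ball 0 e1"
        and \<sigma>h: "\<forall>t\<in>ball 0 d2. h (\<sigma> t) = h t" and \<sigma>ne: "\<forall>t\<in>ball 0 d2. t \<noteq> 0 \<longrightarrow> \<sigma> t \<noteq> t"
        using root_swap[OF hh1 \<open>e1>0\<close> h0 dh hnz] by blast
      define t0 where "t0 = complex_of_real (min d2 e1 / 2)"
      have t0: "t0 \<in> ball 0 d2" "t0 \<in> ball 0 d" "t0 \<in> ball 0 e" "t0 \<noteq> 0"
        using \<open>d2>0\<close> \<open>e1>0\<close> by (auto simp: t0_def e1_def)
      have "\<sigma> t0 \<in> ball 0 e1" using \<sigma>im t0(1) by blast
      then have s0: "\<sigma> t0 \<in> ball 0 d" "\<sigma> t0 \<in> ball 0 e" by (simp_all add: e1_def)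
      have "\<sigma> t0 = t0" using injhF[of "\<sigma> t0" t0] s0 t0 \<sigma>h Fz by simp
      then show False using \<sigma>ne t0 by blast
    next
      case False
      obtain d \<sigma> where "d > 0" and \<sigma>h: "\<sigma> holomorphic_on ball 0 d" and \<sigma>0: "\<sigma> 0 = 0"
        and \<sigma>im: "\<sigma> ` ball 0 d \<subseteq> ball 0 e"
        and \<sigma>F: "\<forall>t\<in>ball 0 d. F (\<sigma> t) = F t" and \<sigma>ne: "\<forall>t\<in>ball 0 d. t \<noteq> 0 \<longrightarrow> \<sigma> t \<noteq> t"
        using root_swap[OF Fh \<open>e>0\<close> F0 dF False] by blast
      define d1 where "d1 = min d e"
      have "d1 > 0" using \<open>d>0\<close> \<open>e>0\<close> by (simp add: d1_def)
      have sub1: "ball (0::complex) d1 \<subseteq> ball 0 d" "ball (0::complex) d1 \<subseteq> ball 0 e" by (auto simp: d1_def)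
      define \<delta> where "\<delta> = (\<lambda>t. h t - h (\<sigma> t))"
      have \<sigma>h1: "\<sigma> holomorphic_on ball 0 d1" using \<sigma>h sub1(1) by (rule holomorphic_on_subset)
      have "(h \<circ> \<sigma>) holomorphic_on ball 0 d1"
        by (rule holomorphic_on_compose_gen[OF \<sigma>h1 hh]) (use \<sigma>im sub1 in blast)
      then have hc: "(\<lambda>t. h (\<sigma> t)) holomorphic_on ball 0 d1" by (simp add: comp_def)
      have "(\<lambda>t. h t - h (\<sigma> t)) holomorphic_on ball 0 d1"
        by (rule holomorphic_on_diff[OF _ hc]) (use holomorphic_on_subset[OF hh sub1(2)] in simp)
      then have \<delta>h: "\<delta> holomorphic_on ball 0 d1" unfolding \<delta>_def .
      have \<delta>0: "\<delta> 0 = 0" by (simp add: \<delta>_def \<sigma>0)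
      have \<delta>nz: "\<not>(\<exists>d'>0. \<forall>t\<in>ball 0 d'. \<delta> t = 0)"
      proof
        assume "\<exists>d'>0. \<forall>t\<in>ball 0 d'. \<delta> t = 0"
        then obtain d' where "d' > 0" and hz: "\<forall>t\<in>ball 0 d'. \<delta> t = 0" by blast
        define t0 where "t0 = complex_of_real (min d' d1 / 2)"
        have t0: "t0 \<in> ball 0 d'" "t0 \<in> ball 0 d" "t0 \<in> ball 0 e" "t0 \<noteq> 0"
          using \<open>d'>0\<close> \<open>d1>0\<close> by (auto simp: t0_def d1_def)
        have se: "\<sigma> t0 \<in> ball 0 e" using \<sigma>im t0(2) by blast
        have "\<delta> t0 = 0" using hz t0(1) by blast
        then have hs: "h (\<sigma> t0) = h t0" by (simp add: \<delta>_def)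
        have Fs: "F (\<sigma> t0) = F t0" using \<sigma>F t0(2) by blast
        have "\<sigma> t0 = t0" by (rule injhF[OF se t0(3) hs Fs])
        then show False using \<sigma>ne t0 by blast
      qed
      have est: "\<exists>K. eventually (\<lambda>t. \<bar>Re (\<delta> t)\<bar> \<le> cmod (\<delta> t) / 2 + K * cmod t ^ N) (at 0)" for N
      proof -
        have "(\<lambda>t. r (\<gamma> t)) \<in> O[at 0](\<lambda>t. cmod t ^ N)"
          using assms(5) unfolding tangent_infinite_order_def by blast
        then obtain c where "c > 0" and cev: "eventually (\<lambda>t. norm (r (\<gamma> t)) \<le> c * norm (cmod t ^ N)) (at 0)"
          by (rule landau_o.bigE)
        have cev': "eventually (\<lambda>t. \<bar>r (\<gamma> t)\<bar> \<le> c * cmod t ^ N) (at 0)"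
          using cev by eventually_elim simp
        have cnh: "eventually (\<lambda>t. \<bar>r (\<gamma> t)\<bar> \<le> c * cmod t ^ N) (nhds 0)"
          using cev' unfolding eventually_at_filter
          by eventually_elim (use g0 rp \<open>c>0\<close> in auto)
        have \<sigma>c: "isCont \<sigma> 0"
          using holo_isCont[OF holomorphic_on_imp_continuous_on[OF \<sigma>h1] \<open>d1>0\<close>] .
        have \<sigma>lim: "filterlim \<sigma> (nhds 0) (at 0)"
          using \<sigma>c \<sigma>0 unfolding isCont_def by simp
        have cs: "eventually (\<lambda>t. \<bar>r (\<gamma> (\<sigma> t))\<bar> \<le> c * cmod (\<sigma> t) ^ N) (at 0)"
          by (rule eventually_compose_filterlim[OF cnh \<sigma>lim])
        obtain C where "C \<ge> 0" and cb: "eventually (\<lambda>t. cmod (\<sigma> t) \<le> C * cmod t) (at 0)"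
          using holo_lin_bound[OF \<sigma>h1 \<open>d1>0\<close> \<sigma>0] by blast
        have c1g: "isCont (\<lambda>t. fst (\<gamma> t)) 0"
          using holo_isCont[OF holomorphic_on_imp_continuous_on[OF h1] \<open>e>0\<close>] .
        have c2g: "isCont (\<lambda>t. snd (\<gamma> t)) 0"
          using holo_isCont[OF holomorphic_on_imp_continuous_on[OF h2] \<open>e>0\<close>] .
        have "isCont (\<lambda>t. (fst (\<gamma> t), snd (\<gamma> t))) 0"
          using c1g c2g by (rule continuous_Pair)
        then have gc: "isCont \<gamma> 0" by simp
        have glim: "(\<gamma> \<longlongrightarrow> p) (at 0)" using gc g0 unfolding isCont_def by simp
        have gslim: "((\<lambda>t. \<gamma> (\<sigma> t)) \<longlongrightarrow> p) (at 0)"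
          using isCont_tendsto_compose[OF gc \<sigma>lim] g0 by simp
        define C0 where "C0 = cmod a + cmod b"
        have "C0 > 0" using ab by (auto simp: C0_def add_pos_nonneg add_nonneg_pos)
        define \<epsilon> where "\<epsilon> = S / (2 * C0)"
        have "\<epsilon> > 0" using Spos \<open>C0>0\<close> by (simp add: \<epsilon>_def)
        then obtain \<rho> where "\<rho> > 0" and \<rho>: "\<forall>x\<in>ball p \<rho>. \<forall>y\<in>ball p \<rho>.
            \<bar>r x - r y - L (x - y)\<bar> \<le> \<epsilon> * norm (x - y)" using estL by blast
        have e1: "eventually (\<lambda>t. \<gamma> t \<in> ball p \<rho>) (at 0)"
          using tendstoD[OF glim \<open>\<rho>>0\<close>] by (simp add: dist_commute)
        have e2: "eventually (\<lambda>t. \<gamma> (\<sigma> t) \<in> ball p \<rho>) (at 0)"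
          using tendstoD[OF gslim \<open>\<rho>>0\<close>] by (simp add: dist_commute)
        have e3: "eventually (\<lambda>t. t \<in> ball 0 d1 \<and> t \<in> UNIV) (at (0::complex))"
          by (rule eventually_at_ball[OF \<open>d1>0\<close>])
        show ?thesis
        proof (intro exI[of _ "c + c * C ^ N"])
          show "eventually (\<lambda>t. \<bar>Re (\<delta> t)\<bar> \<le> cmod (\<delta> t) / 2 + (c + c * C ^ N) * cmod t ^ N) (at 0)"
            using cev' cs cb e1 e2 e3
          proof eventually_elim
            case (elim t)
            have tb: "t \<in> ball 0 d" using elim(6) sub1 by blast
            have Fe: "F (\<sigma> t) = F t" using \<sigma>F tb by blast
            define x where "x = \<gamma> t - \<gamma> (\<sigma> t)"
            have xA: "fst x = A t - A (\<sigma> t)" and xB: "snd x = B t - B (\<sigma> t)"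
              by (simp_all add: x_def A_def B_def)
            have "of_real S * fst x = of_real S * A t - of_real S * A (\<sigma> t)"
              by (simp add: xA right_diff_distrib)
            also have "\<dots> = (cnj a * h t + b * F t) - (cnj a * h (\<sigma> t) + b * F (\<sigma> t))"
              by (simp only: recA)
            also have "\<dots> = cnj a * \<delta> t" using Fe by (simp add: \<delta>_def algebra_simps)
            finally have fx: "of_real S * fst x = cnj a * \<delta> t" .
            have "of_real S * snd x = of_real S * B t - of_real S * B (\<sigma> t)"
              by (simp add: xB right_diff_distrib)
            also have "\<dots> = (cnj b * h t - a * F t) - (cnj b * h (\<sigma> t) - a * F (\<sigma> t))"
              by (simp only: recB)
            also have "\<dots> = cnj b * \<delta> t" using Fe by (simp add: \<delta>_def algebra_simps)
            finally have sx: "of_real S * snd x = cnj b * \<delta> t" .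
            have nfx: "S * cmod (fst x) = cmod a * cmod (\<delta> t)"
              using arg_cong[OF fx, of cmod] Spos by (simp add: norm_mult)
            have nsx: "S * cmod (snd x) = cmod b * cmod (\<delta> t)"
              using arg_cong[OF sx, of cmod] Spos by (simp add: norm_mult)
            have "norm x \<le> cmod (fst x) + cmod (snd x)"
              using norm_Pair_le[of "fst x" "snd x"] by simp
            then have "S * norm x \<le> S * (cmod (fst x) + cmod (snd x))"
              using Spos by (intro mult_left_mono) auto
            also have "\<dots> = S * cmod (fst x) + S * cmod (snd x)" by (simp add: distrib_left)
            also have "\<dots> = C0 * cmod (\<delta> t)" using nfx nsx by (simp add: C0_def algebra_simps)
            finally have Snx: "S * norm x \<le> C0 * cmod (\<delta> t)" .
            have "\<epsilon> * norm x = (S * norm x) / (2 * C0)" by (simp add: \<epsilon>_def)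
            also have "\<dots> \<le> (C0 * cmod (\<delta> t)) / (2 * C0)"
              using Snx \<open>C0>0\<close> by (intro divide_right_mono) auto
            also have "\<dots> = cmod (\<delta> t) / 2" using \<open>C0>0\<close> by simp
            finally have enx: "\<epsilon> * norm x \<le> cmod (\<delta> t) / 2" .
            have "a * fst x + b * snd x = \<delta> t"
              by (simp add: xA xB h_def \<delta>_def algebra_simps)
            then have Lx: "L x = Re (\<delta> t)" using Lrep[of "fst x" "snd x"] by simp
            have "\<bar>r (\<gamma> t) - r (\<gamma> (\<sigma> t)) - L x\<bar> \<le> \<epsilon> * norm x"
              using \<rho> elim(4) elim(5) unfolding x_def by blast
            then have "\<bar>r (\<gamma> t) - r (\<gamma> (\<sigma> t)) - Re (\<delta> t)\<bar> \<le> \<epsilon> * norm x" using Lx by simp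
            with enx have bnd: "\<bar>r (\<gamma> t) - r (\<gamma> (\<sigma> t)) - Re (\<delta> t)\<bar> \<le> cmod (\<delta> t) / 2"
              by linarith
            have "cmod (\<sigma> t) ^ N \<le> (C * cmod t) ^ N"
              using elim(3) by (intro power_mono) auto
            then have "c * cmod (\<sigma> t) ^ N \<le> c * (C * cmod t) ^ N"
              using \<open>c>0\<close> by (intro mult_left_mono) auto
            moreover have "c * (C * cmod t) ^ N = c * C ^ N * cmod t ^ N"
              by (simp add: power_mult_distrib)
            ultimately have r2: "\<bar>r (\<gamma> (\<sigma> t))\<bar> \<le> c * C ^ N * cmod t ^ N"
              using elim(2) by linarith
            have "(c + c * C ^ N) * cmod t ^ N = c * cmod t ^ N + c * C ^ N * cmod t ^ N"
              by (simp add: algebra_simps)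
            then show ?case using bnd r2 elim(1) unfolding abs_le_iff by linarith
          qed
        qed
      qed
      show False by (rule leading_term_contra[OF \<delta>h \<open>d1>0\<close> \<delta>0 \<delta>nz est])
    qed
  qed
  have fA: "(\<lambda>t. fst (\<gamma> t - p)) = A" by (rule ext) (simp add: A_def)
  have fB: "(\<lambda>t. snd (\<gamma> t - p)) = B" by (rule ext) (simp add: B_def)
  have "vanishing_order (\<lambda>t. \<gamma> t - p) = 1"
    unfolding vanishing_order_def fA fB
  proof (rule Least_equality)
    show "(deriv ^^ 1) A 0 \<noteq> 0 \<or> (deriv ^^ 1) B 0 \<noteq> 0" using main by simp
  next
    fix y assume "(deriv ^^ y) A 0 \<noteq> 0 \<or> (deriv ^^ y) B 0 \<noteq> 0"
    then show "1 \<le> y" using A0 B0 by (cases y) auto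
  qed
  then show ?thesis using assms(4) unfolding in_Gamma_reg_def by blast
qed

end
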